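(* Let $N$ (pgf $\mathcal P_N$) and $X$ be given marginals, and consider CRMs in $\aleph^{FGM*}$ with these marginals. (i) If the associated Bernoulli sequence satisfies $I_j=I$ for all $j\ge0$ (a single Bernoulli$(1/2)$ variable $I$), the aggregate claim amount $S^{(\triangle,\triangle)}$ satisfies $\mathcal L_{S^{(\triangle,\triangle)}}(t)=\tfrac12\mathcal P_{N_{[1]}}(\mathcal L_{X_{[1]}}(t))+\tfrac12\mathcal P_{N_{[2]}}(\mathcal L_{X_{[2]}}(t))$, $t\ge0$. (ii) If $I_0=1-I$ and $I_j=I$ for $j\ge1$, the aggregate claim amount $S^{(\triangledown,\triangle)}$ satisfies $\mathcal L_{S^{(\triangledown,\triangle)}}(t)=\tfrac12\mathcal P_{N_{[1]}}(\mathcal L_{X_{[2]}}(t))+\tfrac12\mathcal P_{N_{[2]}}(\mathcal L_{X_{[1]}}(t))$, $t\ge0$. (iii) If $I_j=I$ for $j\ge1$ and $I_0$ is a Bernoulli$(1/2)$ variable independent of $I$, the aggregate claim amount $S^{(\perp,\triangle)}$ satisfies $\mathcal L_{S^{(\perp,\triangle)}}(t)=\tfrac12\mathcal P_N(\mathcal L_{X_{[1]}}(t))+\tfrac12\mathcal P_N(\mathcal L_{X_{[2]}}(t))$, $t\ge0$.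
   Context: Collective risk model (CRM): $N$ is a random variable with values in $\mathbb{N}_0$, cdf $F_N$, support $A_N$; $\underline X=\{X_j\}_{j\ge1}$ is a sequence of identically distributed strictly positive random variables with common cdf $F_X$ (generic copy $X$); $S=\sum_{j\ge1}X_j\mathbb{1}_{\{N\ge j\}}$. $\mathcal L_Y(t)=E[e^{-tY}]$ and $\mathcal P_N(z)=E[z^N]$. A $d$-variate FGM copula with parameters $\theta_{j_1\dots j_k}$ is $C(u_1,\dots,u_d)=\prod_{m=1}^d u_m\big(1+\sum_{k=2}^d\sum_{j_1<\dots<j_k}\theta_{j_1\dots j_k}\bar u_{j_1}\cdots\bar u_{j_k}\big)$, $\bar u=1-u$, with parameters such that $1+\sum_{k}\sum_{j_1<\dots<j_k}\theta_{j_1\dots j_k}\varepsilon_{j_1}\cdots\varepsilon_{j_k}\ge0$ for all $\varepsilon\in\{-1,1\}^d$. To it is associated the random vector $\boldsymbol I$ on $\{0,1\}^d$ with pmf $f_{\boldsymbol I}(\boldsymbol i)=2^{-d}\big(1+\sum_{k=2}^d\sum_{j_1<\dots<j_k}(-1)^{i_{j_1}+\dots+i_{j_k}}\theta_{j_1\dots j_k}\big)$; this is a bijection between $d$-variate FGM copulas and distributions on $\{0,1\}^d$ with Bernoulli$(1/2)$ margins. A CRM belongs to $\aleph^{FGM}$ if for every $k\in\mathbb{N}_1$, $k\le\sup A_N$, $F_{N,X_1,\dots,X_k}(n,x_1,\dots,x_k)=C_k(F_N(n),F_X(x_1),\dots,F_X(x_k))$ for a $(k+1)$-variate FGM copula $C_k$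 with coordinates indexed $0,\dots,k$ (index $0$ for $N$); the associated vectors $(I_0,\dots,I_k)$ form a consistent sequence $\{I_j\}_{j\ge0}$ (specifying this sequence determines the CRM). $\aleph^{FGM*}$: CRMs in $\aleph^{FGM}$ with $(N,X_1,\dots,X_k)\overset d=(N,X_{\pi(1)},\dots,X_{\pi(k)})$ for all $k$ and permutations $\pi$. For a random variable $Y$, $Y_{[1]}$, $Y_{[2]}$ denote the minimum and maximum of two iid copies of $Y$. *)

theory Defs
  imports "HOL-Probability.Probability"
begin

definition fgm_subsets :: "nat \<Rightarrow> nat set set" where
  "fgm_subsets d = {J. J \<subseteq> {..<d} \<and> 2 \<le> card J}"

definition fgm_copula :: "nat \<Rightarrow> (nat set \<Rightarrow> real) \<Rightarrow> (nat \<Rightarrow> real) \<Rightarrow> real" where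
  "fgm_copula d \<theta> u =
     (\<Prod>m<d. u m) * (1 + (\<Sum>J\<in>fgm_subsets d. \<theta> J * (\<Prod>j\<in>J. 1 - u j)))"

definition fgm_admissible :: "nat \<Rightarrow> (nat set \<Rightarrow> real) \<Rightarrow> bool" where
  "fgm_admissible d \<theta> \<longleftrightarrow>
     (\<forall>\<epsilon>::nat \<Rightarrow> real. (\<forall>m<d. \<epsilon> m = -1 \<or> \<epsilon> m = 1) \<longrightarrow>
        0 \<le> 1 + (\<Sum>J\<in>fgm_subsets d. \<theta> J * (\<Prod>j\<in>J. \<epsilon> j)))"

text \<open>pmf of the Bernoulli vector I on {0,1}^d associated with the FGM copula.\<close>
definition fgm_pmf :: "nat \<Rightarrow> (nat set \<Rightarrow> real) \<Rightarrow> (nat \<Rightarrow> nat) \<Rightarrow> real" where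
  "fgm_pmf d \<theta> i =
     (1 / 2 ^ d) * (1 + (\<Sum>J\<in>fgm_subsets d. (-1) ^ (\<Sum>j\<in>J. i j) * \<theta> J))"

definition cdf_N :: "'a measure \<Rightarrow> ('a \<Rightarrow> nat) \<Rightarrow> nat \<Rightarrow> real" where
  "cdf_N M N n = measure M {\<omega> \<in> space M. N \<omega> \<le> n}"

definition cdf_X :: "'a measure \<Rightarrow> (nat \<Rightarrow> 'a \<Rightarrow> real) \<Rightarrow> real \<Rightarrow> real" where
  "cdf_X M X x = measure M {\<omega> \<in> space M. X 1 \<omega> \<le> x}"

definition joint_cdf :: "'a measure \<Rightarrow> ('a \<Rightarrow> nat) \<Rightarrow> (nat \<Rightarrow> 'a \<Rightarrow> real) \<Rightarrow> nat
    \<Rightarrow> nat \<Rightarrow> (nat \<Rightarrow> real) \<Rightarrow> real" where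
  "joint_cdf M N X k n x =
     measure M {\<omega> \<in> space M. N \<omega> \<le> n \<and> (\<forall>j\<in>{1..k}. X j \<omega> \<le> x j)}"

definition support_N :: "'a measure \<Rightarrow> ('a \<Rightarrow> nat) \<Rightarrow> nat set" where
  "support_N M N = {n. 0 < measure M {\<omega> \<in> space M. N \<omega> = n}}"

definition CRM :: "'a measure \<Rightarrow> ('a \<Rightarrow> nat) \<Rightarrow> (nat \<Rightarrow> 'a \<Rightarrow> real) \<Rightarrow> bool" where
  "CRM M N X \<longleftrightarrow> prob_space M \<and> N \<in> measurable M (count_space UNIV) \<and>
     (\<forall>j\<ge>1. X j \<in> borel_measurable M) \<and>
     (\<forall>j\<ge>1. \<forall>\<omega>\<in>space M. 0 < X j \<omega>) \<and>
     (\<forall>j\<ge>1. distr M borel (X j) = distr M borel (X 1))"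

text \<open>Membership in aleph^FGM with associated Bernoulli sequence whose finite-dimensional
  laws are given by p: p k is the pmf of (I_0, ..., I_k) on {0,1}^(k+1).
  The condition "k \<le> sup A_N" is written as "k \<le> n for some n in A_N".\<close>
definition aleph_FGM ::
  "'a measure \<Rightarrow> ('a \<Rightarrow> nat) \<Rightarrow> (nat \<Rightarrow> 'a \<Rightarrow> real) \<Rightarrow> (nat \<Rightarrow> (nat \<Rightarrow> nat) \<Rightarrow> real) \<Rightarrow> bool" where
  "aleph_FGM M N X p \<longleftrightarrow> CRM M N X \<and>
     (\<forall>k\<ge>1. (\<exists>n\<in>support_N M N. k \<le> n) \<longrightarrow>
        (\<exists>\<theta>. fgm_admissible (k+1) \<theta> \<and>
           (\<forall>i. (\<forall>j\<le>k. i j \<in> {0,1}) \<longrightarrow> fgm_pmf (k+1) \<theta> i = p k i) \<and>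
           (\<forall>n x. joint_cdf M N X k n x =
               fgm_copula (k+1) \<theta> (\<lambda>m. if m = 0 then cdf_N M N n else cdf_X M X (x m)))))"

definition exchangeable_CRM :: "'a measure \<Rightarrow> ('a \<Rightarrow> nat) \<Rightarrow> (nat \<Rightarrow> 'a \<Rightarrow> real) \<Rightarrow> bool" where
  "exchangeable_CRM M N X \<longleftrightarrow>
     (\<forall>k\<ge>1. \<forall>\<pi>. \<pi> permutes {1..k} \<longrightarrow> (\<forall>n x.
        measure M {\<omega> \<in> space M. N \<omega> \<le> n \<and> (\<forall>j\<in>{1..k}. X (\<pi> j) \<omega> \<le> x j)}
        = joint_cdf M N X k n x))"

definition aleph_FGM_star where
  "aleph_FGM_star M N X p \<longleftrightarrow> aleph_FGM M N X p \<and> exchangeable_CRM M N X"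

text \<open>The three Bernoulli sequences: p k i = P((I_0..I_k) = (i 0..i k)), I ~ Bern(1/2).\<close>
definition p_tri_tri :: "nat \<Rightarrow> (nat \<Rightarrow> nat) \<Rightarrow> real" where
  "p_tri_tri k i = (if \<forall>j\<le>k. i j = i 0 then 1/2 else 0)"   \<comment> \<open>I_j = I for all j \<ge> 0\<close>

definition p_nabla_tri :: "nat \<Rightarrow> (nat \<Rightarrow> nat) \<Rightarrow> real" where
  "p_nabla_tri k i = (if \<forall>j\<in>{1..k}. i j = 1 - i 0 then 1/2 else 0)"  \<comment> \<open>I_0 = 1 - I, I_j = I\<close>

definition p_perp_tri :: "nat \<Rightarrow> (nat \<Rightarrow> nat) \<Rightarrow> real" where
  "p_perp_tri k i = (if \<forall>j\<in>{1..k}. i j = i 1 then 1/4 else 0)"  \<comment> \<open>I_0 indep. of I, I_j = I\<close>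

definition aggregate :: "('a \<Rightarrow> nat) \<Rightarrow> (nat \<Rightarrow> 'a \<Rightarrow> real) \<Rightarrow> 'a \<Rightarrow> real" where
  "aggregate N X \<omega> = (\<Sum>j\<in>{1..N \<omega>}. X j \<omega>)"

definition pgf :: "nat measure \<Rightarrow> real \<Rightarrow> real" where
  "pgf D z = (\<integral>n. z ^ n \<partial>D)"

definition laplace :: "real measure \<Rightarrow> real \<Rightarrow> real" where
  "laplace D t = (\<integral>y. exp (- t * y) \<partial>D)"

definition law_min2 :: "('b::linorder) measure \<Rightarrow> 'b measure" where
  "law_min2 D = distr (D \<Otimes>\<^sub>M D) D (\<lambda>(a, b). min a b)"

definition law_max2 :: "('b::linorder) measure \<Rightarrow> 'b measure" where
  "law_max2 D = distr (D \<Otimes>\<^sub>M D) D (\<lambda>(a, b). max a b)"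

end

theory Submission
  imports Defs "HOL-Probability.Probability"
begin



lemma exp_nn:
  fixes t y :: real assumes t: "t > 0"
  shows "(\<integral>\<^sup>+ s. ennreal (t * exp (- t * s)) * indicator {y..} s \<partial>lborel) = ennreal (exp (- t * y))"
proof -
  have "(\<integral>\<^sup>+ s. ennreal (t * exp (- t * s)) * indicator {y..} s \<partial>lborel) = ennreal (0 - (- exp (- t * y)))"
  proof (rule nn_integral_FTC_atLeast)
    show "((\<lambda>s. - exp (- t * s)) \<longlongrightarrow> 0) at_top"
    proof -
      have "((\<lambda>s. - exp (- t * s)) \<longlongrightarrow> - 0) at_top"
        by (intro tendsto_minus filterlim_compose[OF exp_at_bot] filterlim_tendsto_neg_mult_at_bot[OF tendsto_const] filterlim_ident) (use t in auto)
      then show ?thesis by simp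
    qed
  qed (auto intro!: derivative_eq_intros simp: t less_imp_le)
  then show ?thesis by simp
qed




lemma fub:
  fixes Z :: "'a \<Rightarrow> ennreal" and Y :: "'a \<Rightarrow> real"
  assumes sf: "sigma_finite_measure M" and Y: "Y \<in> borel_measurable M" and Z: "Z \<in> borel_measurable M"
    and t: "t > 0"
  shows "(\<integral>\<^sup>+ \<omega>. Z \<omega> * ennreal (exp (- t * Y \<omega>)) \<partial>M)
       = (\<integral>\<^sup>+ s. ennreal (t * exp (- t * s)) * (\<integral>\<^sup>+ \<omega>. Z \<omega> * indicator {..s} (Y \<omega>) \<partial>M) \<partial>lborel)"
proof -
  interpret M: sigma_finite_measure M by fact
  interpret P: pair_sigma_finite M lborel
    by unfold_locales
  let ?f = "\<lambda>\<omega> s. Z \<omega> * (ennreal (t * exp (- t * s)) * (if Y \<omega> \<le> s then 1 else 0))"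
  have meas: "case_prod ?f \<in> borel_measurable (M \<Otimes>\<^sub>M lborel)"
    using Y Z by measurable
  have "(\<integral>\<^sup>+ \<omega>. Z \<omega> * ennreal (exp (- t * Y \<omega>)) \<partial>M)
      = (\<integral>\<^sup>+ \<omega>. (\<integral>\<^sup>+ s. ?f \<omega> s \<partial>lborel) \<partial>M)"
  proof (rule nn_integral_cong)
    fix \<omega>
    have "(\<integral>\<^sup>+ s. ?f \<omega> s \<partial>lborel) = Z \<omega> * (\<integral>\<^sup>+ s. ennreal (t * exp (- t * s)) * indicator {Y \<omega>..} s \<partial>lborel)"
      by (subst nn_integral_cmult[symmetric]) (auto intro!: nn_integral_cong simp: indicator_def)
    then show "Z \<omega> * ennreal (exp (- t * Y \<omega>)) = (\<integral>\<^sup>+ s. ?f \<omega> s \<partial>lborel)"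
      using exp_nn[OF t] by simp
  qed
  also have "\<dots> = (\<integral>\<^sup>+ s. (\<integral>\<^sup>+ \<omega>. ?f \<omega> s \<partial>M) \<partial>lborel)"
    by (rule P.Fubini'[OF meas, symmetric])
  also have "\<dots> = (\<integral>\<^sup>+ s. ennreal (t * exp (- t * s)) * (\<integral>\<^sup>+ \<omega>. Z \<omega> * indicator {..s} (Y \<omega>) \<partial>M) \<partial>lborel)"
  proof (rule nn_integral_cong)
    fix s
    show "(\<integral>\<^sup>+ \<omega>. ?f \<omega> s \<partial>M) = ennreal (t * exp (- t * s)) * (\<integral>\<^sup>+ \<omega>. Z \<omega> * indicator {..s} (Y \<omega>) \<partial>M)"
      using Z Y by (subst nn_integral_cmult[symmetric]) (auto intro!: nn_integral_cong simp: indicator_def mult_ac)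
  qed
  finally show ?thesis .
qed




definition hh :: "nat \<Rightarrow> real \<Rightarrow> real" where
  "hh a u = (if a = 0 then 2*u - u^2 else u^2)"

lemma sum01: "(\<Sum>b\<in>{0::nat,1}. f b) = f 0 + f 1" by simp

lemma sum_PiE01:
  fixes f :: "nat \<Rightarrow> nat \<Rightarrow> real"
  shows "(\<Sum>i\<in>PiE {..<d} (\<lambda>_. {0::nat,1}). \<Prod>m<d. f m (i m)) = (\<Prod>m<d. f m 0 + f m (1::nat)) "
  using prod_sum_PiE[of "{..<d}" "\<lambda>_. {0::nat,1}" f] by simp

lemma fgm_mix:
  "fgm_copula d \<theta> u = (\<Sum>i\<in>PiE {..<d} (\<lambda>_. {0,1}). fgm_pmf d \<theta> i * (\<Prod>m<d. hh (i m) (u m)))"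
proof -
  let ?P = "\<lambda>i. \<Prod>m<d. hh (i m) (u m)"
  let ?I = "PiE {..<d} (\<lambda>_. {0::nat,1})"
  have S2: "(\<Sum>i\<in>?I. ?P i) = 2^d * (\<Prod>m<d. u m)"
    by (subst sum_PiE01) (simp add: hh_def prod.distrib)
  have S3: "(\<Sum>i\<in>?I. (-1) ^ (\<Sum>j\<in>J. i j) * ?P i) = 2^d * (\<Prod>m<d. u m) * (\<Prod>j\<in>J. 1 - u j)"
    if J: "J \<in> fgm_subsets d" for J
  proof -
    have JJ: "J \<subseteq> {..<d}" using J by (simp add: fgm_subsets_def)
    have fJ: "finite J" using JJ finite_subset by blast
    have "(\<Sum>i\<in>?I. (-1) ^ (\<Sum>j\<in>J. i j) * ?P i) =
          (\<Sum>i\<in>?I. \<Prod>m<d. (if m \<in> J then (-1::real) ^ i m else 1) * hh (i m) (u m))"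
    proof (rule sum.cong[OF refl])
      fix i
      have "(-1::real) ^ (\<Sum>j\<in>J. i j) = (\<Prod>j\<in>J. (-1) ^ i j)" by (simp add: power_sum)
      also have "\<dots> = (\<Prod>m<d. (if m \<in> J then (-1::real) ^ i m else 1))"
        using JJ by (simp add: prod.If_cases Int_absorb1 Int_absorb2)
      finally show "(-1) ^ (\<Sum>j\<in>J. i j) * ?P i = (\<Prod>m<d. (if m \<in> J then (-1::real) ^ i m else 1) * hh (i m) (u m))"
        by (simp add: prod.distrib)
    qed
    also have "\<dots> = (\<Prod>m<d. (if m \<in> J then 2 * u m * (1 - u m) else 2 * u m))"
      by (subst sum_PiE01) (auto intro!: prod.cong simp: hh_def power2_eq_square algebra_simps)
    also have "\<dots> = (\<Prod>m<d. 2 * u m) * (\<Prod>m<d. if m \<in> J then 1 - u m else 1)"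
      by (subst prod.distrib[symmetric]) (auto intro!: prod.cong)
    also have "(\<Prod>m<d. if m \<in> J then 1 - u m else 1) = (\<Prod>j\<in>J. 1 - u j)"
      using JJ by (simp add: prod.If_cases Int_absorb1 Int_absorb2)
    finally show ?thesis by (simp add: prod.distrib)
  qed
  have "(\<Sum>i\<in>?I. fgm_pmf d \<theta> i * ?P i)
      = (\<Sum>i\<in>?I. (1 / 2 ^ d) * ?P i + (\<Sum>J\<in>fgm_subsets d. (1 / 2^d) * \<theta> J * ((-1) ^ (\<Sum>j\<in>J. i j) * ?P i)))"
    by (auto intro!: sum.cong simp: fgm_pmf_def algebra_simps sum_distrib_left sum_distrib_right)
  also have "\<dots> = (1 / 2 ^ d) * (\<Sum>i\<in>?I. ?P i) + (\<Sum>J\<in>fgm_subsets d. (1 / 2^d) * \<theta> J * (\<Sum>i\<in>?I. (-1) ^ (\<Sum>j\<in>J. i j) * ?P i))"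
    by (simp add: sum.distrib sum_distrib_left; rule sum.swap)
  also have "\<dots> = fgm_copula d \<theta> u"
    using S2 S3 by (simp add: fgm_copula_def algebra_simps sum_distrib_left)
  finally show ?thesis by simp
qed




lemma mix_reduce:
  fixes p :: "(nat \<Rightarrow> nat) \<Rightarrow> real"
  assumes k: "k \<ge> 1"
  and p: "\<And>i. i \<in> PiE {..<k+1} (\<lambda>_. {0,1}) \<Longrightarrow> p i = (if \<forall>j\<in>{1..k}. i j = i 1 then w (i 0) (i 1) else 0)"
  shows "(\<Sum>i\<in>PiE {..<k+1} (\<lambda>_. {0::nat,1}). p i * (\<Prod>m<k+1. hh (i m) (u m)))
       = (\<Sum>a\<in>{0::nat,1}. \<Sum>b\<in>{0::nat,1}. w a b * hh a (u 0) * (\<Prod>m\<in>{1..k}. hh b (u m)))"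
proof -
  let ?I = "PiE {..<k+1} (\<lambda>_. {0::nat,1})"
  define c :: "nat \<times> nat \<Rightarrow> nat \<Rightarrow> nat" where
    "c = (\<lambda>(a,b) j. if j = 0 then a else if j \<le> k then b else undefined)"
  let ?A = "{0::nat,1} \<times> {0::nat,1}"
  have sub: "c ` ?A \<subseteq> ?I" by (auto simp: c_def PiE_def extensional_def)
  have inj: "inj_on c ?A"
  proof (rule inj_onI)
    fix x y assume "x \<in> ?A" "y \<in> ?A" "c x = c y"
    then have "c x 0 = c y 0" "c x 1 = c y 1" by auto
    moreover obtain a b a' b' where "x = (a,b)" "y = (a',b')" by fastforce
    ultimately show "x = y" using k by (simp add: c_def)
  qed
  have zero: "p i * (\<Prod>m<k+1. hh (i m) (u m)) = 0" if i: "i \<in> ?I - c ` ?A" for i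
  proof -
    have "\<not> (\<forall>j\<in>{1..k}. i j = i 1)"
    proof
      assume cond: "\<forall>j\<in>{1..k}. i j = i 1"
      have "i = c (i 0, i 1)"
      proof
        fix j show "i j = c (i 0, i 1) j"
        proof (cases "j = 0")
          case False
          show ?thesis
          proof (cases "j \<le> k")
            case True then show ?thesis using False bspec[OF cond, of j] by (simp add: c_def)
          next
            case F2: False
            then have "j \<notin> {..<k+1}" by simp
            then have "i j = undefined" using i by (auto intro: PiE_arb)
            then show ?thesis using False F2 by (simp add: c_def)
          qed
        qed (simp add: c_def)
      qed
      moreover have "(i 0, i 1) \<in> ?A"
      proof -
        have iI: "i \<in> ?I" using i by blast
        show ?thesis using PiE_mem[OF iI, of 0] PiE_mem[OF iI, of 1] k by auto
      qed
      ultimately show False using i by blast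
    qed
    moreover have "i \<in> ?I" using i by blast
    ultimately have "p i = 0" using p by (metis (no_types, lifting))
    then show ?thesis by simp
  qed
  have "(\<Sum>i\<in>?I. p i * (\<Prod>m<k+1. hh (i m) (u m))) = (\<Sum>i\<in>c ` ?A. p i * (\<Prod>m<k+1. hh (i m) (u m)))"
    apply (rule sum.mono_neutral_right[OF _ sub])
     apply (simp add: finite_PiE)
    using zero by blast
  also have "\<dots> = (\<Sum>x\<in>?A. p (c x) * (\<Prod>m<k+1. hh (c x m) (u m)))"
    by (rule sum.reindex[OF inj, unfolded comp_def])
  also have "\<dots> = (\<Sum>a\<in>{0::nat,1}. \<Sum>b\<in>{0::nat,1}. p (c (a,b)) * (\<Prod>m<k+1. hh (c (a,b) m) (u m)))"
    by (subst sum.cartesian_product) (simp add: case_prod_beta)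
  also have "\<dots> = (\<Sum>a\<in>{0::nat,1}. \<Sum>b\<in>{0::nat,1}. w a b * hh a (u 0) * (\<Prod>m\<in>{1..k}. hh b (u m)))"
  proof (intro sum.cong refl)
    fix a b assume ab: "a \<in> {0::nat,1}" "b \<in> {0::nat,1}"
    have "(a,b) \<in> ?A" using ab by blast
    then have cI: "c (a,b) \<in> ?I" by (rule subsetD[OF sub imageI])
    have c0: "c (a,b) 0 = a" and c1: "c (a,b) 1 = b" using k by (simp_all add: c_def)
    have cc: "\<forall>j\<in>{1..k}. c (a,b) j = c (a,b) 1" using k by (auto simp: c_def)
    have pc: "p (c (a,b)) = w a b" unfolding p[OF cI] using cc unfolding c0 c1 by simp
    have ins: "{..<k+1} = insert 0 {1..k}" by auto
    have "(\<Prod>m<k+1. hh (c (a,b) m) (u m)) = hh a (u 0) * (\<Prod>m\<in>{1..k}. hh b (u m))"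
      unfolding ins by (subst prod.insert) (auto intro!: prod.cong simp: c_def)
    then show "p (c (a,b)) * (\<Prod>m<k+1. hh (c (a,b) m) (u m)) = w a b * hh a (u 0) * (\<Prod>m\<in>{1..k}. hh b (u m))"
      using pc by simp
  qed
  finally show ?thesis .
qed




definition lawm :: "nat \<Rightarrow> ('b::linorder) measure \<Rightarrow> 'b measure" where
  "lawm a D = (if a = 0 then law_min2 D else law_max2 D)"

lemma law_basic:
  fixes D :: "'b::linorder measure"
  assumes D: "prob_space D" and sp: "space D = UNIV"
    and mmin: "(\<lambda>(a,b). min a b) \<in> measurable (D \<Otimes>\<^sub>M D) D"
    and mmax: "(\<lambda>(a,b). max a b) \<in> measurable (D \<Otimes>\<^sub>M D) D"
    and ss: "\<And>s. {..s} \<in> sets D"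
  shows "prob_space (lawm a D)" and "sets (lawm a D) = sets D" and "space (lawm a D) = UNIV"
    and "measure (lawm a D) {..s} = hh a (measure D {..s})"
proof -
  interpret D: prob_space D by fact
  interpret P: pair_prob_space D D by unfold_locales
  show "prob_space (lawm a D)" "sets (lawm a D) = sets D" "space (lawm a D) = UNIV"
    using P.prob_space_distr[OF mmin] P.prob_space_distr[OF mmax] sp
    by (auto simp: lawm_def law_min2_def law_max2_def)
  have gt: "{s<..} \<in> sets D"
  proof -
    have "{s<..} = space D - {..s}" using sp by auto
    then show ?thesis using ss by auto
  qed
  have spP: "space (D \<Otimes>\<^sub>M D) = UNIV" using sp by (simp add: space_pair_measure)
  have mt: "measure (D \<Otimes>\<^sub>M D) (A \<times> A) = (measure D A)^2" if "A \<in> sets D" for A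
    using D.emeasure_pair_measure_Times[OF that that] that
    by (simp add: D.emeasure_eq_measure P.emeasure_eq_measure ennreal_mult''[symmetric] power2_eq_square)
  have cg: "measure D {s<..} = 1 - measure D {..s}"
    using D.prob_compl[OF ss[of s]] sp by (metis Compl_atMost Compl_eq_Diff_UNIV)
  show "measure (lawm a D) {..s} = hh a (measure D {..s})"
  proof (cases "a = 0")
    case True
    have "(\<lambda>(a,b). min a b) -` {..s} \<inter> space (D \<Otimes>\<^sub>M D) = space (D \<Otimes>\<^sub>M D) - {s<..} \<times> {s<..}"
      using spP by (auto simp: min_le_iff_disj not_le)
    then have "measure (lawm a D) {..s} = measure (D \<Otimes>\<^sub>M D) (space (D \<Otimes>\<^sub>M D) - {s<..} \<times> {s<..})"
      using True ss[of s] mmin by (simp add: lawm_def law_min2_def measure_distr)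
    also have "\<dots> = 1 - (measure D {s<..})^2"
      using P.prob_compl[of "{s<..} \<times> {s<..}"] gt mt[OF gt] by simp
    finally show ?thesis using True cg by (simp add: hh_def power2_eq_square algebra_simps)
  next
    case False
    have "(\<lambda>(a,b). max a b) -` {..s} \<inter> space (D \<Otimes>\<^sub>M D) = {..s} \<times> {..s}"
      using spP by auto
    then have "measure (lawm a D) {..s} = measure (D \<Otimes>\<^sub>M D) ({..s} \<times> {..s})"
      using False ss[of s] mmax by (simp add: lawm_def law_max2_def measure_distr)
    then show ?thesis using False mt[OF ss] by (simp add: hh_def)
  qed
qed




lemma hh_0[simp]: "hh a 0 = 0" by (simp add: hh_def)
lemma hh_nonneg: "0 \<le> u \<Longrightarrow> u \<le> 1 \<Longrightarrow> 0 \<le> hh a u"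
  using mult_right_mono[of u 1 u] by (auto simp: hh_def power2_eq_square)

context
  fixes M :: "'a measure" and N :: "'a \<Rightarrow> nat" and X :: "nat \<Rightarrow> 'a \<Rightarrow> real"
  assumes crm: "CRM M N X"
begin

lemma PM: "prob_space M" using crm by (simp add: CRM_def)
lemma Nm[measurable]: "N \<in> measurable M (count_space UNIV)" using crm by (simp add: CRM_def)
lemma Xm: "j \<ge> 1 \<Longrightarrow> X j \<in> borel_measurable M" using crm by (simp add: CRM_def)
lemma Xpos: "j \<ge> 1 \<Longrightarrow> \<omega> \<in> space M \<Longrightarrow> 0 < X j \<omega>" using crm by (simp add: CRM_def)

interpretation M: prob_space M by (rule PM)

definition "DNm = distr M (count_space UNIV) N"
definition "DXm = distr M borel (X 1)"

lemma DX_facts: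
  shows "prob_space DXm" "space DXm = UNIV" "sets DXm = sets borel"
    "(\<lambda>(a,b). min a b) \<in> measurable (DXm \<Otimes>\<^sub>M DXm) DXm"
    "(\<lambda>(a,b). max a b) \<in> measurable (DXm \<Otimes>\<^sub>M DXm) DXm"
    "\<And>s. {..s} \<in> sets DXm"
proof -
  show "prob_space DXm" unfolding DXm_def using Xm[of 1] by (simp add: M.prob_space_distr)
  show sp: "space DXm = UNIV" "sets DXm = sets borel" by (simp_all add: DXm_def)
  have "(\<lambda>(a::real,b). min a b) \<in> borel_measurable (borel \<Otimes>\<^sub>M borel)"
    unfolding case_prod_beta by measurable
  then show "(\<lambda>(a,b). min a b) \<in> measurable (DXm \<Otimes>\<^sub>M DXm) DXm"
    by (subst measurable_cong_sets[OF sets_pair_measure_cong[OF sp(2) sp(2)] sp(2)])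
  have "(\<lambda>(a::real,b). max a b) \<in> borel_measurable (borel \<Otimes>\<^sub>M borel)"
    unfolding case_prod_beta by measurable
  then show "(\<lambda>(a,b). max a b) \<in> measurable (DXm \<Otimes>\<^sub>M DXm) DXm"
    by (subst measurable_cong_sets[OF sets_pair_measure_cong[OF sp(2) sp(2)] sp(2)])
  show "\<And>s. {..s} \<in> sets DXm" using sp by simp
qed

lemma DN_facts:
  shows "prob_space DNm" "space DNm = UNIV" "sets DNm = sets (count_space UNIV)"
    "(\<lambda>(a,b). min a b) \<in> measurable (DNm \<Otimes>\<^sub>M DNm) DNm"
    "(\<lambda>(a,b). max a b) \<in> measurable (DNm \<Otimes>\<^sub>M DNm) DNm"
    "\<And>s. {..s} \<in> sets DNm"
proof -
  show "prob_space DNm" unfolding DNm_def by (simp add: M.prob_space_distr)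
  show sp: "space DNm = UNIV" "sets DNm = sets (count_space UNIV)" by (simp_all add: DNm_def)
  have ps: "sets (DNm \<Otimes>\<^sub>M DNm) = sets (count_space (UNIV :: (nat \<times> nat) set))"
  proof -
    have e: "count_space UNIV \<Otimes>\<^sub>M count_space UNIV = count_space (UNIV::(nat\<times>nat) set)"
      using pair_measure_countable[of "UNIV::nat set" "UNIV::nat set"] by simp
    show ?thesis unfolding sets_pair_measure_cong[OF sp(2) sp(2)] e ..
  qed
  show "(\<lambda>(a,b). min a b) \<in> measurable (DNm \<Otimes>\<^sub>M DNm) DNm"
    by (subst measurable_cong_sets[OF ps sp(2)]) simp
  show "(\<lambda>(a,b). max a b) \<in> measurable (DNm \<Otimes>\<^sub>M DNm) DNm"
    by (subst measurable_cong_sets[OF ps sp(2)]) simp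
  show "\<And>s. {..s} \<in> sets DNm" using sp by simp
qed

lemma DX_cdf: "measure DXm {..s} = cdf_X M X s"
proof -
  have "X 1 -` {..s} \<inter> space M = {\<omega> \<in> space M. X 1 \<omega> \<le> s}" by auto
  then show ?thesis using Xm[of 1] by (simp add: DXm_def cdf_X_def measure_distr)
qed

lemma DN_cdf: "measure DNm {..s} = cdf_N M N s"
proof -
  have "N -` {..s} \<inter> space M = {\<omega> \<in> space M. N \<omega> \<le> s}" by auto
  then show ?thesis by (simp add: DNm_def cdf_N_def measure_distr)
qed

lemmas LX = law_basic[OF DX_facts(1,2,4,5,6)]
lemmas LN = law_basic[OF DN_facts(1,2,4,5,6)]

lemma cdfX_01: "0 \<le> cdf_X M X s" "cdf_X M X s \<le> 1"
  by (simp_all add: cdf_X_def)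
lemma cdfN_01: "0 \<le> cdf_N M N s" "cdf_N M N s \<le> 1"
  by (simp_all add: cdf_N_def)

lemma cdfX_0: "cdf_X M X 0 = 0"
proof -
  have "{\<omega> \<in> space M. X 1 \<omega> \<le> 0} = {}" using Xpos[of 1] by force
  then show ?thesis unfolding cdf_X_def by (metis measure_empty)
qed

lemma LX_pos: "AE y in lawm b DXm. 0 < y"
proof -
  interpret L: prob_space "lawm b DXm" by (rule LX(1))
  have "measure (lawm b DXm) {..0} = 0" using LX(4)[of b 0] by (simp add: DX_cdf cdfX_0)
  moreover have "{..0} \<in> sets (lawm b DXm)" using LX(2) DX_facts(6) by simp
  ultimately have "AE y in lawm b DXm. y \<notin> {..0}"
    by (intro AE_I'[of "{..0}"]) (auto simp: L.emeasure_eq_measure)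
  then show ?thesis by (auto simp: not_le)
qed

lemma laplace_nn:
  assumes t: "t \<ge> 0"
  shows "(\<integral>\<^sup>+ y. ennreal (exp (- t * y)) \<partial>lawm b DXm) = ennreal (laplace (lawm b DXm) t)"
    and "0 \<le> laplace (lawm b DXm) t" "laplace (lawm b DXm) t \<le> 1"
proof -
  interpret L: prob_space "lawm b DXm" by (rule LX(1))
  have meas: "(\<lambda>y. exp (- t * y)) \<in> borel_measurable (lawm b DXm)"
    by (subst measurable_cong_sets[OF trans[OF LX(2) DX_facts(3)] refl]) simp
  have bnd: "AE y in lawm b DXm. norm (exp (- t * y)) \<le> 1"
    using LX_pos by eventually_elim (use t in \<open>auto simp: mult_nonneg_nonneg\<close>)
  have int: "integrable (lawm b DXm) (\<lambda>y. exp (- t * y))"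
    by (rule L.integrable_const_bound[OF bnd meas])
  show "(\<integral>\<^sup>+ y. ennreal (exp (- t * y)) \<partial>lawm b DXm) = ennreal (laplace (lawm b DXm) t)"
    unfolding laplace_def by (rule nn_integral_eq_integral[OF int]) simp
  show "0 \<le> laplace (lawm b DXm) t" unfolding laplace_def by simp
  have "laplace (lawm b DXm) t \<le> integral\<^sup>L (lawm b DXm) (\<lambda>_. 1)"
    unfolding laplace_def
    by (rule integral_mono_AE[OF int]) (use bnd in auto)
  then show "laplace (lawm b DXm) t \<le> 1" using L.prob_space by simp
qed

end



context
  fixes M :: "'a measure" and N :: "'a \<Rightarrow> nat" and X :: "nat \<Rightarrow> 'a \<Rightarrow> real"
  assumes crm: "CRM M N X"
begin

interpretation M: prob_space M by (rule PM[OF crm])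

lemma cdfX_mono: "mono (cdf_X M X)"
  unfolding cdf_X_def mono_def using Xm[OF crm, of 1]
  by (auto intro!: M.finite_measure_mono)

lemma cdfX_meas: "(\<lambda>s. hh b (cdf_X M X s)) \<in> borel_measurable borel"
proof -
  have "cdf_X M X \<in> borel_measurable borel" by (rule borel_measurable_mono[OF cdfX_mono])
  then show ?thesis unfolding hh_def by measurable
qed

lemma lap_cdf:
  assumes t: "t > 0"
  shows "(\<integral>\<^sup>+ s. ennreal (t * exp (- t * s)) * ennreal (hh b (cdf_X M X s)) \<partial>lborel)
       = ennreal (laplace (lawm b (DXm M X)) t)"
proof -
  let ?L = "lawm b (DXm M X)"
  interpret L: prob_space ?L by (rule LX(1)[OF crm])
  have sL: "sets ?L = sets borel" using LX(2)[OF crm] DX_facts(3)[OF crm] by simp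
  have idm: "(\<lambda>y. y) \<in> borel_measurable ?L" by (simp add: measurable_cong_sets[OF sL refl])
  have "(\<integral>\<^sup>+ y. (\<lambda>_. 1) y * ennreal (exp (- t * y)) \<partial>?L)
     = (\<integral>\<^sup>+ s. ennreal (t * exp (- t * s)) * (\<integral>\<^sup>+ y. (\<lambda>_. 1) y * indicator {..s} y \<partial>?L) \<partial>lborel)"
    by (rule fub[OF _ idm _ t]) (auto intro: L.sigma_finite_measure)
  also have "\<dots> = (\<integral>\<^sup>+ s. ennreal (t * exp (- t * s)) * ennreal (hh b (cdf_X M X s)) \<partial>lborel)"
  proof (rule nn_integral_cong)
    fix s
    have "{..s} \<in> sets ?L" using sL by simp
    then have "(\<integral>\<^sup>+ y. (\<lambda>_. 1) y * indicator {..s} y \<partial>?L) = ennreal (measure ?L {..s})"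
      by (simp add: L.emeasure_eq_measure)
    also have "\<dots> = ennreal (hh b (cdf_X M X s))"
      using LX(4)[OF crm, of b s] by (simp add: DX_cdf[OF crm])
    finally show "ennreal (t * exp (- t * s)) * (\<integral>\<^sup>+ y. (\<lambda>_. 1) y * indicator {..s} y \<partial>?L)
        = ennreal (t * exp (- t * s)) * ennreal (hh b (cdf_X M X s))" by simp
  qed
  finally show ?thesis using laplace_nn(1)[OF crm, of t b] t by simp
qed

lemma prodX_meas:
  fixes f :: "nat \<Rightarrow> real \<Rightarrow> real"
  assumes "\<And>j. j \<in> I \<Longrightarrow> f j \<in> borel_measurable borel" "\<And>j. j \<in> I \<Longrightarrow> 1 \<le> j"
  shows "(\<lambda>\<omega>. \<Prod>j\<in>I. f j (X j \<omega>)) \<in> borel_measurable M"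
proof (rule borel_measurable_prod[where f="\<lambda>j \<omega>. f j (X j \<omega>)"])
  fix j assume j: "j \<in> I"
  show "(\<lambda>\<omega>. f j (X j \<omega>)) \<in> borel_measurable M"
    by (rule measurable_compose[OF Xm[OF crm] assms(1)]) (use j assms(2) in auto)
qed

lemma prod_ind: "finite I \<Longrightarrow> (\<Prod>j\<in>I. indicator {..x j} (Y j) :: real) = (if \<forall>j\<in>I. Y j \<le> x j then 1 else 0)"
  by (auto simp: indicator_def prod_zero_iff)

end



lemma enn_dist:
  fixes g C0 C1 h0 h1 :: real
  assumes "0 \<le> g" "0 \<le> C0" "0 \<le> C1" "0 \<le> h0" "0 \<le> h1"
  shows "ennreal g * ennreal (C0*h0 + C1*h1) = ennreal C0 * (ennreal g * ennreal h0) + ennreal C1 * (ennreal g * ennreal h1)"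
proof -
  have "ennreal C0 * (ennreal g * ennreal h0) + ennreal C1 * (ennreal g * ennreal h1)
      = ennreal (C0 * (g * h0)) + ennreal (C1 * (g * h1))"
    using assms by (simp add: ennreal_mult)
  also have "\<dots> = ennreal (C0 * (g * h0) + C1 * (g * h1))"
    using assms by (simp add: ennreal_plus)
  also have "\<dots> = ennreal g * ennreal (C0*h0 + C1*h1)"
    using assms by (simp add: ennreal_mult[symmetric] algebra_simps)
  finally show ?thesis ..
qed

lemma enn_lin:
  fixes a b c d :: real
  assumes "0 \<le> a" "0 \<le> b" "0 \<le> c" "0 \<le> d"
  shows "ennreal a * ennreal b + ennreal c * ennreal d = ennreal (a*b + c*d)"
  using assms by (simp add: ennreal_mult ennreal_plus)

context
  fixes M :: "'a measure" and N :: "'a \<Rightarrow> nat" and X :: "nat \<Rightarrow> 'a \<Rightarrow> real"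
  assumes crm: "CRM M N X"
begin

interpretation M: prob_space M by (rule PM[OF crm])

declare Nm[OF crm, measurable]

lemma Q_ind:
  fixes w :: "nat \<Rightarrow> nat \<Rightarrow> real"
  assumes t: "t > 0" and k: "k \<ge> 1"
  and jc: "\<And>n' x. joint_cdf M N X k n' x = (\<Sum>a\<in>{0,1}. \<Sum>b\<in>{0,1}. w a b * hh a (cdf_N M N n') * (\<Prod>m\<in>{1..k}. hh b (cdf_X M X (x m))))"
  and wnn: "\<And>a b. 0 \<le> w a b"
  shows "m \<le> k \<Longrightarrow> (\<integral>\<^sup>+ \<omega>. ennreal (indicator {\<omega>\<in>space M. N \<omega> \<le> n'} \<omega> * (\<Prod>j\<in>{1..m}. exp (- t * X j \<omega>))
            * (\<Prod>j\<in>{m+1..k}. indicator {..x j} (X j \<omega>))) \<partial>M)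
         = ennreal (\<Sum>b\<in>{0,1}. (\<Sum>a\<in>{0,1}. w a b * hh a (cdf_N M N n')) * laplace (lawm b (DXm M X)) t ^ m
              * (\<Prod>j\<in>{m+1..k}. hh b (cdf_X M X (x j))))"
proof (induction m arbitrary: x)
  case 0
  let ?A = "{\<omega>\<in>space M. N \<omega> \<le> n' \<and> (\<forall>j\<in>{1..k}. X j \<omega> \<le> x j)}"
  have A_eq: "?A = {\<omega>\<in>space M. N \<omega> \<le> n'} \<inter> (\<Inter>j\<in>{1..k}. X j -` {..x j} \<inter> space M)"
    using k by auto
  have A: "?A \<in> sets M"
  proof -
    have "{\<omega>\<in>space M. N \<omega> \<le> n'} \<in> sets M" by measurable
    moreover have "\<forall>j\<in>{1..k}. X j -` {..x j} \<inter> space M \<in> sets M"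
      using measurable_sets[OF Xm[OF crm]] by auto
    then have "(\<Inter>j\<in>{1..k}. X j -` {..x j} \<inter> space M) \<in> sets M"
      using k by (intro sets.finite_INT) (auto simp del: vimage_Int)
    ultimately show ?thesis unfolding A_eq by (rule sets.Int)
  qed
  have "(\<integral>\<^sup>+ \<omega>. ennreal (indicator {\<omega>\<in>space M. N \<omega> \<le> n'} \<omega> * (\<Prod>j\<in>{1..0}. exp (- t * X j \<omega>))
            * (\<Prod>j\<in>{0+1..k}. indicator {..x j} (X j \<omega>))) \<partial>M) = (\<integral>\<^sup>+ \<omega>. indicator ?A \<omega> \<partial>M)"
    by (rule nn_integral_cong) (simp add: prod_ind[OF crm]; simp add: indicator_def)
  also have "\<dots> = ennreal (joint_cdf M N X k n' x)"
    using A by (simp add: joint_cdf_def M.emeasure_eq_measure)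
  also have "\<dots> = ennreal (\<Sum>b\<in>{0,1}. (\<Sum>a\<in>{0,1}. w a b * hh a (cdf_N M N n')) * laplace (lawm b (DXm M X)) t ^ 0
              * (\<Prod>j\<in>{0+1..k}. hh b (cdf_X M X (x j))))"
    unfolding jc by (simp add: algebra_simps)
  finally show ?case .
next
  case (Suc m)
  then have mk: "m \<le> k" "Suc m \<le> k" by auto
  let ?W = "\<lambda>b. (\<Sum>a\<in>{0,1}. w a b * hh a (cdf_N M N n'))"
  let ?L = "\<lambda>b. laplace (lawm b (DXm M X)) t"
  let ?P = "\<lambda>b. (\<Prod>j\<in>{m+2..k}. hh b (cdf_X M X (x j)))"
  let ?C = "\<lambda>b. ?W b * ?L b ^ m * ?P b"
  let ?h = "\<lambda>b s. hh b (cdf_X M X s)"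
  have hnn: "0 \<le> ?h b s" for b s by (rule hh_nonneg[OF cdfX_01[OF crm]])
  have Wnn: "0 \<le> ?W b" for b using wnn hh_nonneg[OF cdfN_01[OF crm]] by (auto intro!: sum_nonneg)
  have Lnn: "0 \<le> ?L b" for b using laplace_nn(2)[OF crm, of t b] t by simp
  have Pnn: "0 \<le> ?P b" for b using hnn by (auto intro!: prod_nonneg)
  have Cnn: "0 \<le> ?C b" for b using Wnn Lnn Pnn by simp
  define Z where "Z \<omega> = ennreal (indicator {\<omega>\<in>space M. N \<omega> \<le> n'} \<omega> * (\<Prod>j\<in>{1..m}. exp (- t * X j \<omega>))
            * (\<Prod>j\<in>{m+2..k}. indicator {..x j} (X j \<omega>)))" for \<omega>
  have Zm: "Z \<in> borel_measurable M"
  proof -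
    have "(\<lambda>\<omega>. \<Prod>j\<in>{1..m}. exp (- t * X j \<omega>)) \<in> borel_measurable M"
      by (rule prodX_meas[OF crm, where f="\<lambda>j y. exp (- t * y)"]) auto
    moreover have "(\<lambda>\<omega>. \<Prod>j\<in>{m+2..k}. indicator {..x j} (X j \<omega>) :: real) \<in> borel_measurable M"
      by (rule prodX_meas[OF crm, where f="\<lambda>j. indicator {..x j}"]) auto
    moreover have "(\<lambda>\<omega>. indicator {\<omega>\<in>space M. N \<omega> \<le> n'} \<omega> :: real) \<in> borel_measurable M"
      by measurable
    ultimately show ?thesis unfolding Z_def by measurable
  qed
  have Ym: "X (Suc m) \<in> borel_measurable M" by (rule Xm[OF crm]) simp
  have e1: "ennreal (indicator {\<omega>\<in>space M. N \<omega> \<le> n'} \<omega> * (\<Prod>j\<in>{1..Suc m}. exp (- t * X j \<omega>))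
            * (\<Prod>j\<in>{Suc m+1..k}. indicator {..x j} (X j \<omega>)))
        = Z \<omega> * ennreal (exp (- t * X (Suc m) \<omega>))" for \<omega>
    unfolding Z_def
    by (subst ennreal_mult''[symmetric]) (auto simp: prod.cl_ivl_Suc mult_ac intro!: arg_cong[where f=ennreal])
  have e2: "Z \<omega> * indicator {..s} (X (Suc m) \<omega>)
      = ennreal (indicator {\<omega>\<in>space M. N \<omega> \<le> n'} \<omega> * (\<Prod>j\<in>{1..m}. exp (- t * X j \<omega>))
            * (\<Prod>j\<in>{m+1..k}. indicator {..(x(Suc m := s)) j} (X j \<omega>)))" for \<omega> s
  proof -
    have ins: "{m+1..k} = insert (Suc m) {m+2..k}" using mk by auto
    have "(\<Prod>j\<in>{m+1..k}. indicator {..(x(Suc m := s)) j} (X j \<omega>) :: real)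
        = indicator {..s} (X (Suc m) \<omega>) * (\<Prod>j\<in>{m+2..k}. indicator {..x j} (X j \<omega>))"
      unfolding ins by (subst prod.insert) (auto intro!: prod.cong)
    then show ?thesis unfolding Z_def
      by (simp add: ennreal_mult' ennreal_indicator[symmetric] mult_ac)
  qed
  have R: "(\<Sum>b\<in>{0,1}. ?W b * ?L b ^ m * (\<Prod>j\<in>{m+1..k}. hh b (cdf_X M X ((x(Suc m := s)) j))))
      = ?C 0 * ?h 0 s + ?C 1 * ?h 1 s" for s
  proof -
    have ins: "{m+1..k} = insert (Suc m) {m+2..k}" using mk by auto
    have "(\<Prod>j\<in>{m+1..k}. hh b (cdf_X M X ((x(Suc m := s)) j))) = ?h b s * ?P b" for b
      unfolding ins by (subst prod.insert) (auto intro!: prod.cong)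
    then show ?thesis by (simp add: mult_ac)
  qed
  have "(\<integral>\<^sup>+ \<omega>. ennreal (indicator {\<omega>\<in>space M. N \<omega> \<le> n'} \<omega> * (\<Prod>j\<in>{1..Suc m}. exp (- t * X j \<omega>))
            * (\<Prod>j\<in>{Suc m+1..k}. indicator {..x j} (X j \<omega>))) \<partial>M)
      = (\<integral>\<^sup>+ \<omega>. Z \<omega> * ennreal (exp (- t * X (Suc m) \<omega>)) \<partial>M)"
    unfolding e1 ..
  also have "\<dots> = (\<integral>\<^sup>+ s. ennreal (t * exp (- t * s)) * (\<integral>\<^sup>+ \<omega>. Z \<omega> * indicator {..s} (X (Suc m) \<omega>) \<partial>M) \<partial>lborel)"
    by (rule fub[OF _ Ym Zm t]) (rule M.sigma_finite_measure)
  also have "\<dots> = (\<integral>\<^sup>+ s. ennreal (t * exp (- t * s)) * ennreal (?C 0 * ?h 0 s + ?C 1 * ?h 1 s) \<partial>lborel)"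
    unfolding e2 Suc.IH[OF mk(1)] R ..
  also have "\<dots> = (\<integral>\<^sup>+ s. ennreal (?C 0) * (ennreal (t * exp (- t * s)) * ennreal (?h 0 s))
                     + ennreal (?C 1) * (ennreal (t * exp (- t * s)) * ennreal (?h 1 s)) \<partial>lborel)"
    using Cnn hnn t
    by (intro nn_integral_cong enn_dist) auto
  also have "\<dots> = ennreal (?C 0) * ennreal (?L 0) + ennreal (?C 1) * ennreal (?L 1)"
    using lap_cdf[OF crm t] cdfX_meas[OF crm]
    by (subst nn_integral_add) (auto simp: nn_integral_cmult)
  also have "\<dots> = ennreal (\<Sum>b\<in>{0,1}. ?W b * ?L b ^ Suc m * (\<Prod>j\<in>{Suc m+1..k}. hh b (cdf_X M X (x j))))"
    unfolding enn_lin[OF Cnn Lnn Cnn Lnn] by (simp add: mult_ac)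
  finally show ?case .
qed

end



lemma enn_sub:
  fixes c :: ennreal
  assumes "ennreal a = ennreal b + c" "0 \<le> b"
  shows "c = ennreal (a - b)"
proof -
  have "c = (ennreal b + c) - ennreal b" by simp
  also have "\<dots> = ennreal a - ennreal b" using assms(1) by simp
  also have "\<dots> = ennreal (a - b)" using assms(2) by (rule ennreal_minus)
  finally show ?thesis .
qed

context
  fixes M :: "'a measure" and N :: "'a \<Rightarrow> nat" and X :: "nat \<Rightarrow> 'a \<Rightarrow> real"
  assumes crm: "CRM M N X"
begin

interpretation M: prob_space M by (rule PM[OF crm])

declare Nm[OF crm, measurable]

definition "qq a n = measure (lawm a (DNm M N)) {n}"

lemma qq_nonneg: "0 \<le> qq a n" unfolding qq_def by simp

lemma cdfN_split: "cdf_N M N (Suc n) = cdf_N M N n + measure M {\<omega>\<in>space M. N \<omega> = Suc n}"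
proof -
  have "{\<omega>\<in>space M. N \<omega> \<le> Suc n} = {\<omega>\<in>space M. N \<omega> \<le> n} \<union> {\<omega>\<in>space M. N \<omega> = Suc n}" by auto
  moreover have "{\<omega>\<in>space M. N \<omega> \<le> n} \<inter> {\<omega>\<in>space M. N \<omega> = Suc n} = {}" by auto
  ultimately show ?thesis unfolding cdf_N_def
    by (simp add: M.finite_measure_Union)
qed

lemma cdfN_0: "cdf_N M N 0 = measure M {\<omega>\<in>space M. N \<omega> = 0}"
  unfolding cdf_N_def by simp

lemma qq_0: "qq a 0 = hh a (cdf_N M N 0)"
proof -
  have "{0::nat} = {..0}" by auto
  then show ?thesis unfolding qq_def using LN(4)[OF crm, of a 0] DN_cdf[OF crm, of 0] by simp
qed

lemma qq_Suc: "qq a (Suc n) = hh a (cdf_N M N (Suc n)) - hh a (cdf_N M N n)"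
proof -
  interpret L: prob_space "lawm a (DNm M N)" by (rule LN(1)[OF crm])
  have sL: "sets (lawm a (DNm M N)) = UNIV" using LN(2)[OF crm] DN_facts(3)[OF crm] by simp
  have "{Suc n} = {..Suc n} - {..n}" by auto
  then have "qq a (Suc n) = measure (lawm a (DNm M N)) {..Suc n} - measure (lawm a (DNm M N)) {..n}"
    unfolding qq_def using sL by (simp add: L.finite_measure_Diff)
  then show ?thesis using LN(4)[OF crm, of a] DN_cdf[OF crm] by simp
qed

lemma pgf_series:
  assumes z: "0 \<le> z" "z \<le> 1"
  shows "ennreal (pgf (lawm a (DNm M N)) z) = (\<Sum>n. ennreal (z ^ n * qq a n))"
    and "0 \<le> pgf (lawm a (DNm M N)) z"
proof -
  let ?L = "lawm a (DNm M N)"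
  interpret L: prob_space ?L by (rule LN(1)[OF crm])
  have sL: "sets ?L = sets (count_space UNIV)" using LN(2)[OF crm] DN_facts(3)[OF crm] by simp
  have meas: "f \<in> borel_measurable ?L" for f :: "nat \<Rightarrow> real"
    by (simp add: measurable_cong_sets[OF sL refl])
  have measE: "f \<in> borel_measurable ?L" for f :: "nat \<Rightarrow> ennreal"
    by (simp add: measurable_cong_sets[OF sL refl])
  have int: "integrable ?L (\<lambda>n. z ^ n)"
    by (rule L.integrable_const_bound[where B=1]) (use z in \<open>auto simp: power_le_one meas\<close>)
  have "ennreal (pgf ?L z) = (\<integral>\<^sup>+ n. ennreal (z ^ n) \<partial>?L)"
    unfolding pgf_def by (rule nn_integral_eq_integral[OF int, symmetric]) (use z in auto)
  also have "\<dots> = (\<integral>\<^sup>+ n. (\<Sum>i. ennreal (z ^ i) * indicator {i} n) \<partial>?L)"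
  proof (rule nn_integral_cong)
    fix n
    have "(\<Sum>i. ennreal (z ^ i) * indicator {i} n) = (\<Sum>i\<in>{n}. ennreal (z ^ i) * indicator {i} n)"
      by (rule suminf_finite) auto
    then show "ennreal (z ^ n) = (\<Sum>i. ennreal (z ^ i) * indicator {i} n)" by simp
  qed
  also have "\<dots> = (\<Sum>i. \<integral>\<^sup>+ n. ennreal (z ^ i) * indicator {i} n \<partial>?L)"
    by (rule nn_integral_suminf) (rule measE)
  also have "\<dots> = (\<Sum>i. ennreal (z ^ i * qq a i))"
  proof (rule suminf_cong)
    fix i
    have "{i} \<in> sets ?L" using sL by simp
    then show "(\<integral>\<^sup>+ n. ennreal (z ^ i) * indicator {i} n \<partial>?L) = ennreal (z ^ i * qq a i)"
      using z by (simp add: nn_integral_cmult_indicator L.emeasure_eq_measure qq_def ennreal_mult)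
  qed
  finally show "ennreal (pgf (lawm a (DNm M N)) z) = (\<Sum>n. ennreal (z ^ n * qq a n))" .
  show "0 \<le> pgf (lawm a (DNm M N)) z" unfolding pgf_def using z by simp
qed

end



context
  fixes M :: "'a measure" and N :: "'a \<Rightarrow> nat" and X :: "nat \<Rightarrow> 'a \<Rightarrow> real"
  assumes crm: "CRM M N X"
begin

interpretation M: prob_space M by (rule PM[OF crm])

declare Nm[OF crm, measurable]

lemma prod_exp_le1:
  assumes t: "t \<ge> 0" and \<omega>: "\<omega> \<in> space M" and I: "\<And>j. j \<in> I \<Longrightarrow> 1 \<le> j"
  shows "(\<Prod>j\<in>I. exp (- t * X j \<omega>)) \<le> 1" "0 \<le> (\<Prod>j\<in>I. exp (- t * X j \<omega>))"
proof -
  have "0 \<le> X j \<omega>" if "j \<in> I" for j using Xpos[OF crm I[OF that] \<omega>] by simp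
  then show "(\<Prod>j\<in>I. exp (- t * X j \<omega>)) \<le> 1"
    using t by (intro prod_le_1) (auto simp: mult_nonneg_nonneg)
  show "0 \<le> (\<Prod>j\<in>I. exp (- t * X j \<omega>))" by (simp add: prod_nonneg)
qed

lemma Tn:
  fixes w :: "nat \<Rightarrow> nat \<Rightarrow> real"
  assumes t: "t > 0"
  and wnn: "\<And>a b. 0 \<le> w a b"
  and whalf: "w 0 0 + w 0 1 = 1/2" "w 1 0 + w 1 1 = 1/2"
  and cop: "\<And>k n' x. k \<ge> 1 \<Longrightarrow> (\<exists>n\<in>support_N M N. k \<le> n) \<Longrightarrow>
      joint_cdf M N X k n' x = (\<Sum>a\<in>{0,1}. \<Sum>b\<in>{0,1}. w a b * hh a (cdf_N M N n') * (\<Prod>m\<in>{1..k}. hh b (cdf_X M X (x m))))"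
  shows "(\<integral>\<^sup>+ \<omega>. ennreal (indicator {\<omega>\<in>space M. N \<omega> = n} \<omega> * (\<Prod>j\<in>{1..n}. exp (- t * X j \<omega>))) \<partial>M)
     = ennreal (\<Sum>a\<in>{0,1}. \<Sum>b\<in>{0,1}. w a b * qq M N a n * laplace (lawm b (DXm M X)) t ^ n)"
proof (cases "measure M {\<omega>\<in>space M. N \<omega> = n} = 0")
  case True
  have "(\<integral>\<^sup>+ \<omega>. ennreal (indicator {\<omega>\<in>space M. N \<omega> = n} \<omega> * (\<Prod>j\<in>{1..n}. exp (- t * X j \<omega>))) \<partial>M)
      \<le> (\<integral>\<^sup>+ \<omega>. indicator {\<omega>\<in>space M. N \<omega> = n} \<omega> \<partial>M)"
  proof (rule nn_integral_mono)
    fix \<omega> assume \<omega>: "\<omega> \<in> space M"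
    have "indicator {\<omega>\<in>space M. N \<omega> = n} \<omega> * (\<Prod>j\<in>{1..n}. exp (- t * X j \<omega>)) \<le> (indicator {\<omega>\<in>space M. N \<omega> = n} \<omega> :: real)"
      using prod_exp_le1(1)[OF less_imp_le[OF t] \<omega>, of "{1..n}"] by (simp add: indicator_def)
    then show "ennreal (indicator {\<omega>\<in>space M. N \<omega> = n} \<omega> * (\<Prod>j\<in>{1..n}. exp (- t * X j \<omega>))) \<le> indicator {\<omega>\<in>space M. N \<omega> = n} \<omega>"
      unfolding ennreal_indicator[symmetric] by (rule ennreal_leI)
  qed
  also have "\<dots> = 0" using True by (simp add: M.emeasure_eq_measure)
  finally have L: "(\<integral>\<^sup>+ \<omega>. ennreal (indicator {\<omega>\<in>space M. N \<omega> = n} \<omega> * (\<Prod>j\<in>{1..n}. exp (- t * X j \<omega>))) \<partial>M) = 0"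
    by simp
  have q0: "qq M N a n = 0" for a
  proof (cases n)
    case 0 then show ?thesis using True by (simp add: qq_0[OF crm] cdfN_0[OF crm])
  next
    case (Suc n0) then show ?thesis using True by (simp add: qq_Suc[OF crm] cdfN_split[OF crm])
  qed
  show ?thesis unfolding L by (simp add: q0)
next
  case False
  then have supp: "n \<in> support_N M N" by (simp add: support_N_def zero_less_measure_iff)
  show ?thesis
  proof (cases n)
    case 0
    have A: "{\<omega>\<in>space M. N \<omega> = 0} \<in> sets M" by measurable
    have "(\<integral>\<^sup>+ \<omega>. ennreal (indicator {\<omega>\<in>space M. N \<omega> = n} \<omega> * (\<Prod>j\<in>{1..n}. exp (- t * X j \<omega>))) \<partial>M)
        = ennreal (cdf_N M N 0)"
      using A 0 by (simp add: ennreal_indicator M.emeasure_eq_measure cdfN_0[OF crm])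
    also have "cdf_N M N 0 = (\<Sum>a\<in>{0,1}. \<Sum>b\<in>{0,1}. w a b * qq M N a n * laplace (lawm b (DXm M X)) t ^ n)"
    proof -
      let ?u = "cdf_N M N 0"
      have "(\<Sum>a\<in>{0,1}. \<Sum>b\<in>{0,1}. w a b * qq M N a n * laplace (lawm b (DXm M X)) t ^ n)
          = (w 0 0 + w 0 1) * hh 0 ?u + (w 1 0 + w 1 1) * hh 1 ?u"
        using 0 by (simp add: qq_0[OF crm] algebra_simps)
      also have "\<dots> = ?u" unfolding whalf by (simp add: hh_def algebra_simps)
      finally show ?thesis by simp
    qed
    finally show ?thesis .
  next
    case (Suc n0)
    define k where "k = Suc n0"
    have k: "k \<ge> 1" "\<exists>n\<in>support_N M N. k \<le> n" using supp Suc by (auto simp: k_def)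
    let ?P = "\<lambda>\<omega>. (\<Prod>j\<in>{1..k}. exp (- t * X j \<omega>))"
    let ?R = "\<lambda>n'. (\<Sum>b\<in>{0,1}. (\<Sum>a\<in>{0,1}. w a b * hh a (cdf_N M N n')) * laplace (lawm b (DXm M X)) t ^ k)"
    have Q: "(\<integral>\<^sup>+ \<omega>. ennreal (indicator {\<omega>\<in>space M. N \<omega> \<le> n'} \<omega> * ?P \<omega>) \<partial>M) = ennreal (?R n')" for n'
      using Q_ind[OF crm t k(1) cop[OF k] wnn, of k n' "\<lambda>_. 0"] by simp
    have Pm: "?P \<in> borel_measurable M"
      by (rule prodX_meas[OF crm, where f="\<lambda>j y. exp (- t * y)"]) auto
    have split: "ennreal (indicator {\<omega>\<in>space M. N \<omega> \<le> Suc n0} \<omega> * ?P \<omega>)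
       = ennreal (indicator {\<omega>\<in>space M. N \<omega> \<le> n0} \<omega> * ?P \<omega>) + ennreal (indicator {\<omega>\<in>space M. N \<omega> = n} \<omega> * ?P \<omega>)" for \<omega>
      using Suc by (auto simp: indicator_def prod_nonneg ennreal_plus[symmetric] simp del: ennreal_plus)
    have "ennreal (?R (Suc n0)) = ennreal (?R n0) + (\<integral>\<^sup>+ \<omega>. ennreal (indicator {\<omega>\<in>space M. N \<omega> = n} \<omega> * ?P \<omega>) \<partial>M)"
      unfolding Q[symmetric] split using Pm by (subst nn_integral_add) auto
    then have "(\<integral>\<^sup>+ \<omega>. ennreal (indicator {\<omega>\<in>space M. N \<omega> = n} \<omega> * ?P \<omega>) \<partial>M) = ennreal (?R (Suc n0) - ?R n0)"
    proof (rule enn_sub)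
      show "0 \<le> ?R n0"
        using wnn hh_nonneg[OF cdfN_01[OF crm]] laplace_nn(2)[OF crm, of t] t
        by (intro sum_nonneg mult_nonneg_nonneg zero_le_power) auto
    qed
    also have "?R (Suc n0) - ?R n0 = (\<Sum>a\<in>{0,1}. \<Sum>b\<in>{0,1}. w a b * qq M N a n * laplace (lawm b (DXm M X)) t ^ n)"
      using Suc by (simp add: qq_Suc[OF crm] k_def algebra_simps)
    finally show ?thesis using Suc by (simp add: k_def)
  qed
qed

end



context
  fixes M :: "'a measure" and N :: "'a \<Rightarrow> nat" and X :: "nat \<Rightarrow> 'a \<Rightarrow> real"
  assumes crm: "CRM M N X"
begin

interpretation M: prob_space M by (rule PM[OF crm])

declare Nm[OF crm, measurable]

lemma agg_meas: "aggregate N X \<in> borel_measurable M"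
  unfolding aggregate_def
proof (rule measurable_compose_countable'[where f="\<lambda>i \<omega>. \<Sum>j\<in>{1..i}. X j \<omega>" and I=UNIV])
  fix i :: nat
  show "(\<lambda>\<omega>. \<Sum>j\<in>{1..i}. X j \<omega>) \<in> borel_measurable M"
    by (rule borel_measurable_sum[where f="\<lambda>j \<omega>. X j \<omega>"]) (auto intro: Xm[OF crm])
qed auto


lemma generic:
  fixes w :: "nat \<Rightarrow> nat \<Rightarrow> real"
  assumes t: "t \<ge> 0"
  and wnn: "\<And>a b. 0 \<le> w a b"
  and whalf: "w 0 0 + w 0 1 = 1/2" "w 1 0 + w 1 1 = 1/2"
  and cop: "\<And>k n' x. k \<ge> 1 \<Longrightarrow> (\<exists>n\<in>support_N M N. k \<le> n) \<Longrightarrow>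
      joint_cdf M N X k n' x = (\<Sum>a\<in>{0,1}. \<Sum>b\<in>{0,1}. w a b * hh a (cdf_N M N n') * (\<Prod>m\<in>{1..k}. hh b (cdf_X M X (x m))))"
  shows "(\<integral>\<omega>. exp (- t * aggregate N X \<omega>) \<partial>M)
     = (\<Sum>a\<in>{0,1}. \<Sum>b\<in>{0,1}. w a b * pgf (lawm a (DNm M N)) (laplace (lawm b (DXm M X)) t))"
proof (cases "t = 0")
  case True
  have L1: "laplace (lawm b (DXm M X)) 0 = 1" for b
  proof -
    interpret L: prob_space "lawm b (DXm M X)" by (rule LX(1)[OF crm])
    show ?thesis unfolding laplace_def by (simp add: L.prob_space)
  qed
  have P1: "pgf (lawm a (DNm M N)) 1 = 1" for a
  proof -
    interpret L: prob_space "lawm a (DNm M N)" by (rule LN(1)[OF crm])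
    have "power (1::real) = (\<lambda>_. 1)" by (rule ext) simp
    then show ?thesis unfolding pgf_def by (simp add: L.prob_space)
  qed
  show ?thesis using True whalf by (simp add: L1 P1 M.prob_space algebra_simps)
next
  case False
  then have t: "t > 0" using t by simp
  let ?L = "\<lambda>b. laplace (lawm b (DXm M X)) t"
  let ?f = "\<lambda>n \<omega>. ennreal (indicator {\<omega>\<in>space M. N \<omega> = n} \<omega> * (\<Prod>j\<in>{1..n}. exp (- t * X j \<omega>)))"
  have agg_nn: "0 \<le> aggregate N X \<omega>" if "\<omega> \<in> space M" for \<omega>
    unfolding aggregate_def using Xpos[OF crm _ that] by (intro sum_nonneg) (auto intro: less_imp_le)
  have int: "integrable M (\<lambda>\<omega>. exp (- t * aggregate N X \<omega>))"
  proof (rule M.integrable_const_bound[where B=1])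
    show "AE \<omega> in M. norm (exp (- t * aggregate N X \<omega>)) \<le> 1"
      using agg_nn t by (auto intro!: AE_I2 simp: mult_nonneg_nonneg)
    show "(\<lambda>\<omega>. exp (- t * aggregate N X \<omega>)) \<in> borel_measurable M"
      using agg_meas by measurable
  qed
  have Lnn: "0 \<le> ?L b" "?L b \<le> 1" for b using laplace_nn(2,3)[OF crm, of t b] t by auto
  have "ennreal (\<integral>\<omega>. exp (- t * aggregate N X \<omega>) \<partial>M) = (\<integral>\<^sup>+ \<omega>. ennreal (exp (- t * aggregate N X \<omega>)) \<partial>M)"
    by (rule nn_integral_eq_integral[OF int, symmetric]) simp
  also have "\<dots> = (\<integral>\<^sup>+ \<omega>. (\<Sum>n. ?f n \<omega>) \<partial>M)"
  proof (rule nn_integral_cong)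
    fix \<omega> assume \<omega>: "\<omega> \<in> space M"
    have "(\<Sum>n. ?f n \<omega>) = (\<Sum>n\<in>{N \<omega>}. ?f n \<omega>)"
      by (rule suminf_finite) (auto simp: indicator_def)
    also have "\<dots> = ennreal (\<Prod>j\<in>{1..N \<omega>}. exp (- t * X j \<omega>))"
      using \<omega> by simp
    also have "(\<Prod>j\<in>{1..N \<omega>}. exp (- t * X j \<omega>)) = exp (- t * aggregate N X \<omega>)"
      unfolding aggregate_def by (simp add: exp_sum sum_distrib_left)
    finally show "ennreal (exp (- t * aggregate N X \<omega>)) = (\<Sum>n. ?f n \<omega>)" by simp
  qed
  also have "\<dots> = (\<Sum>n. \<integral>\<^sup>+ \<omega>. ?f n \<omega> \<partial>M)"
  proof (rule nn_integral_suminf)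
    fix n
    have "(\<lambda>\<omega>. \<Prod>j\<in>{1..n}. exp (- t * X j \<omega>)) \<in> borel_measurable M"
      by (rule prodX_meas[OF crm, where f="\<lambda>j y. exp (- t * y)"]) auto
    then show "?f n \<in> borel_measurable M" by measurable
  qed
  also have "\<dots> = (\<Sum>n. ennreal (\<Sum>a\<in>{0,1}. \<Sum>b\<in>{0,1}. w a b * qq M N a n * ?L b ^ n))"
    by (rule suminf_cong) (rule Tn[OF crm t wnn whalf cop])
  also have "\<dots> = (\<Sum>n. \<Sum>a\<in>{0,1}. \<Sum>b\<in>{0,1}. ennreal (w a b) * ennreal (?L b ^ n * qq M N a n))"
  proof (rule suminf_cong)
    fix n
    have nn: "0 \<le> w a b * qq M N a n * ?L b ^ n" for a b
      using wnn qq_nonneg[OF crm] Lnn by simp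
    have "ennreal (\<Sum>a\<in>{0,1}. \<Sum>b\<in>{0,1}. w a b * qq M N a n * ?L b ^ n)
        = (\<Sum>a\<in>{0,1}. \<Sum>b\<in>{0,1}. ennreal (w a b * qq M N a n * ?L b ^ n))"
      using nn by (simp only: sum_ennreal sum_nonneg)
    also have "\<dots> = (\<Sum>a\<in>{0,1}. \<Sum>b\<in>{0,1}. ennreal (w a b) * ennreal (?L b ^ n * qq M N a n))"
      using wnn by (intro sum.cong refl) (simp add: ennreal_mult' mult_ac)
    finally show "ennreal (\<Sum>a\<in>{0,1}. \<Sum>b\<in>{0,1}. w a b * qq M N a n * ?L b ^ n)
        = (\<Sum>a\<in>{0,1}. \<Sum>b\<in>{0,1}. ennreal (w a b) * ennreal (?L b ^ n * qq M N a n))" .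
  qed
  also have "\<dots> = (\<Sum>a\<in>{0,1}. \<Sum>b\<in>{0,1}. ennreal (w a b) * (\<Sum>n. ennreal (?L b ^ n * qq M N a n)))"
    by (simp only: suminf_sum[OF summableI] ennreal_suminf_cmult)
  also have "\<dots> = (\<Sum>a\<in>{0,1}. \<Sum>b\<in>{0,1}. ennreal (w a b) * ennreal (pgf (lawm a (DNm M N)) (?L b)))"
    using pgf_series(1)[OF crm Lnn] by simp
  also have "\<dots> = ennreal (\<Sum>a\<in>{0,1}. \<Sum>b\<in>{0,1}. w a b * pgf (lawm a (DNm M N)) (?L b))"
  proof -
    have nn: "0 \<le> w a b * pgf (lawm a (DNm M N)) (?L b)" for a b
      using wnn pgf_series(2)[OF crm Lnn] by simp
    have "(\<Sum>a\<in>{0,1}. \<Sum>b\<in>{0,1}. ennreal (w a b) * ennreal (pgf (lawm a (DNm M N)) (?L b)))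
        = (\<Sum>a\<in>{0,1}. \<Sum>b\<in>{0,1}. ennreal (w a b * pgf (lawm a (DNm M N)) (?L b)))"
      using wnn by (intro sum.cong refl) (simp add: ennreal_mult')
    also have "\<dots> = ennreal (\<Sum>a\<in>{0,1}. \<Sum>b\<in>{0,1}. w a b * pgf (lawm a (DNm M N)) (?L b))"
      using nn by (simp only: sum_ennreal sum_nonneg)
    finally show ?thesis .
  qed
  finally have E: "ennreal (\<integral>\<omega>. exp (- t * aggregate N X \<omega>) \<partial>M)
      = ennreal (\<Sum>a\<in>{0,1}. \<Sum>b\<in>{0,1}. w a b * pgf (lawm a (DNm M N)) (?L b))" .
  have "0 \<le> (\<Sum>a\<in>{0,1}. \<Sum>b\<in>{0,1}. w a b * pgf (lawm a (DNm M N)) (?L b))"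
    using wnn pgf_series(2)[OF crm Lnn] by (intro sum_nonneg mult_nonneg_nonneg) auto
  moreover have "0 \<le> (\<integral>\<omega>. exp (- t * aggregate N X \<omega>) \<partial>M)" by simp
  ultimately show ?thesis using E by simp
qed

end



lemma pgf_series_gen:
  assumes D: "prob_space D" and sD: "sets D = sets (count_space (UNIV::nat set))" and z: "0 \<le> z" "z \<le> 1"
  shows "ennreal (pgf D z) = (\<Sum>n. ennreal (z ^ n * measure D {n}))"
proof -
  interpret L: prob_space D by fact
  have meas: "f \<in> borel_measurable D" for f :: "nat \<Rightarrow> real"
    by (simp add: measurable_cong_sets[OF sD refl])
  have measE: "f \<in> borel_measurable D" for f :: "nat \<Rightarrow> ennreal"
    by (simp add: measurable_cong_sets[OF sD refl])
  have int: "integrable D (\<lambda>n. z ^ n)"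
    by (rule L.integrable_const_bound[where B=1]) (use z in \<open>auto simp: power_le_one meas\<close>)
  have "ennreal (pgf D z) = (\<integral>\<^sup>+ n. ennreal (z ^ n) \<partial>D)"
    unfolding pgf_def by (rule nn_integral_eq_integral[OF int, symmetric]) (use z in auto)
  also have "\<dots> = (\<integral>\<^sup>+ n. (\<Sum>i. ennreal (z ^ i) * indicator {i} n) \<partial>D)"
  proof (rule nn_integral_cong)
    fix n
    have "(\<Sum>i. ennreal (z ^ i) * indicator {i} n) = (\<Sum>i\<in>{n}. ennreal (z ^ i) * indicator {i} n)"
      by (rule suminf_finite) auto
    then show "ennreal (z ^ n) = (\<Sum>i. ennreal (z ^ i) * indicator {i} n)" by simp
  qed
  also have "\<dots> = (\<Sum>i. \<integral>\<^sup>+ n. ennreal (z ^ i) * indicator {i} n \<partial>D)"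
    by (rule nn_integral_suminf) (rule measE)
  also have "\<dots> = (\<Sum>i. ennreal (z ^ i * measure D {i}))"
  proof (rule suminf_cong)
    fix i
    have "{i} \<in> sets D" using sD by simp
    then show "(\<integral>\<^sup>+ n. ennreal (z ^ i) * indicator {i} n \<partial>D) = ennreal (z ^ i * measure D {i})"
      using z by (simp add: nn_integral_cmult_indicator L.emeasure_eq_measure ennreal_mult)
  qed
  finally show ?thesis .
qed

context
  fixes M :: "'a measure" and N :: "'a \<Rightarrow> nat" and X :: "nat \<Rightarrow> 'a \<Rightarrow> real"
  assumes crm: "CRM M N X"
begin

interpretation M: prob_space M by (rule PM[OF crm])

lemma DN_point: "measure (DNm M N) {n} = measure M {\<omega>\<in>space M. N \<omega> = n}"
proof -
  have "N -` {n} \<inter> space M = {\<omega>\<in>space M. N \<omega> = n}" by auto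
  then show ?thesis using measure_distr[OF Nm[OF crm], of "{n}"] by (simp add: DNm_def[OF crm])
qed

lemma qq_sum: "qq M N 0 n + qq M N 1 n = 2 * measure M {\<omega>\<in>space M. N \<omega> = n}"
proof (cases n)
  case 0 then show ?thesis by (simp add: qq_0[OF crm] cdfN_0[OF crm] hh_def)
next
  case (Suc n0) then show ?thesis by (simp add: qq_Suc[OF crm] cdfN_split[OF crm] hh_def algebra_simps)
qed

lemma pgf_DN_mix:
  assumes z: "0 \<le> z" "z \<le> 1"
  shows "pgf (DNm M N) z = 1/2 * pgf (lawm 0 (DNm M N)) z + 1/2 * pgf (lawm 1 (DNm M N)) z"
proof -
  have "ennreal (pgf (lawm 0 (DNm M N)) z + pgf (lawm 1 (DNm M N)) z)
      = ennreal (pgf (lawm 0 (DNm M N)) z) + ennreal (pgf (lawm 1 (DNm M N)) z)"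
    using pgf_series(2)[OF crm z] by simp
  also have "\<dots> = (\<Sum>n. ennreal (z ^ n * qq M N 0 n)) + (\<Sum>n. ennreal (z ^ n * qq M N 1 n))"
    using pgf_series(1)[OF crm z] by simp
  also have "\<dots> = (\<Sum>n. ennreal (z ^ n * qq M N 0 n) + ennreal (z ^ n * qq M N 1 n))"
    by (rule suminf_add[OF summableI summableI])
  also have "\<dots> = (\<Sum>n. 2 * ennreal (z ^ n * measure (DNm M N) {n}))"
  proof (rule suminf_cong)
    fix n
    have "ennreal (z ^ n * qq M N 0 n) + ennreal (z ^ n * qq M N 1 n) = ennreal (z ^ n * (qq M N 0 n + qq M N 1 n))"
      using z qq_nonneg[OF crm] by (simp add: ennreal_plus[symmetric] distrib_left del: ennreal_plus)
    also have "\<dots> = ennreal (2 * (z ^ n * measure (DNm M N) {n}))"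
      unfolding qq_sum DN_point by (simp add: mult_ac)
    also have "\<dots> = 2 * ennreal (z ^ n * measure (DNm M N) {n})"
      using z by (simp add: ennreal_mult)
    finally show "ennreal (z ^ n * qq M N 0 n) + ennreal (z ^ n * qq M N 1 n) = 2 * ennreal (z ^ n * measure (DNm M N) {n})" .
  qed
  also have "\<dots> = 2 * ennreal (pgf (DNm M N) z)"
    using pgf_series_gen[OF DN_facts(1)[OF crm] DN_facts(3)[OF crm] z] by simp
  also have "\<dots> = ennreal (2 * pgf (DNm M N) z)"
    by (simp add: ennreal_mult')
  finally have "pgf (lawm 0 (DNm M N)) z + pgf (lawm 1 (DNm M N)) z = 2 * pgf (DNm M N) z"
    using pgf_series(2)[OF crm z] z by (subst (asm) ennreal_inj) (auto simp: pgf_def)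
  then show ?thesis by simp
qed

end



lemma cop_from_aleph:
  fixes p :: "nat \<Rightarrow> (nat \<Rightarrow> nat) \<Rightarrow> real"
  assumes al: "aleph_FGM M N X p" and k: "k \<ge> 1" "\<exists>n\<in>support_N M N. k \<le> n"
  and pw: "\<And>i. i \<in> PiE {..<k+1} (\<lambda>_. {0,1}) \<Longrightarrow> p k i = (if \<forall>j\<in>{1..k}. i j = i 1 then w (i 0) (i 1) else 0)"
  shows "joint_cdf M N X k n' x = (\<Sum>a\<in>{0,1}. \<Sum>b\<in>{0,1}. w a b * hh a (cdf_N M N n') * (\<Prod>m\<in>{1..k}. hh b (cdf_X M X (x m))))"
proof -
  obtain \<theta> where pmf: "\<And>i. (\<forall>j\<le>k. i j \<in> {0,1}) \<Longrightarrow> fgm_pmf (k+1) \<theta> i = p k i"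
    and jc: "\<And>n x. joint_cdf M N X k n x =
               fgm_copula (k+1) \<theta> (\<lambda>m. if m = 0 then cdf_N M N n else cdf_X M X (x m))"
    using al k unfolding aleph_FGM_def by blast
  let ?u = "\<lambda>m. if m = 0 then cdf_N M N n' else cdf_X M X (x m)"
  have "joint_cdf M N X k n' x = (\<Sum>i\<in>PiE {..<k+1} (\<lambda>_. {0,1}). fgm_pmf (k+1) \<theta> i * (\<Prod>m<k+1. hh (i m) (?u m)))"
    unfolding jc fgm_mix ..
  also have "\<dots> = (\<Sum>i\<in>PiE {..<k+1} (\<lambda>_. {0,1}). p k i * (\<Prod>m<k+1. hh (i m) (?u m)))"
  proof (rule sum.cong[OF refl])
    fix i assume i: "i \<in> PiE {..<k+1} (\<lambda>_. {0::nat,1})"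
    have "\<forall>j\<le>k. i j \<in> {0,1}"
    proof (intro allI impI)
      fix j assume "j \<le> k" then have "j \<in> {..<k+1}" by simp
      then show "i j \<in> {0,1}" using PiE_mem[OF i] by blast
    qed
    then show "fgm_pmf (k+1) \<theta> i * (\<Prod>m<k+1. hh (i m) (?u m)) = p k i * (\<Prod>m<k+1. hh (i m) (?u m))"
      using pmf by simp
  qed
  also have "\<dots> = (\<Sum>a\<in>{0::nat,1}. \<Sum>b\<in>{0::nat,1}. w a b * hh a (?u 0) * (\<Prod>m\<in>{1..k}. hh b (?u m)))"
    by (rule mix_reduce[OF k(1)]) (rule pw)
  also have "\<dots> = (\<Sum>a\<in>{0,1}. \<Sum>b\<in>{0,1}. w a b * hh a (cdf_N M N n') * (\<Prod>m\<in>{1..k}. hh b (cdf_X M X (x m))))"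
    by (intro sum.cong refl arg_cong2[where f="(*)"] prod.cong) auto
  finally show ?thesis .
qed

lemma generic_final:
  fixes p :: "nat \<Rightarrow> (nat \<Rightarrow> nat) \<Rightarrow> real" and w :: "nat \<Rightarrow> nat \<Rightarrow> real"
  assumes al: "aleph_FGM_star M N X p"
  and pw: "\<And>k i. k \<ge> 1 \<Longrightarrow> i \<in> PiE {..<k+1} (\<lambda>_. {0,1}) \<Longrightarrow> p k i = (if \<forall>j\<in>{1..k}. i j = i 1 then w (i 0) (i 1) else 0)"
  and wnn: "\<And>a b. 0 \<le> w a b"
  and whalf: "w 0 0 + w 0 1 = 1/2" "w 1 0 + w 1 1 = 1/2"
  and t: "t \<ge> 0"
  shows "(\<integral>\<omega>. exp (- t * aggregate N X \<omega>) \<partial>M)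
     = (\<Sum>a\<in>{0,1}. \<Sum>b\<in>{0,1}. w a b * pgf (lawm a (distr M (count_space UNIV) N)) (laplace (lawm b (distr M borel (X 1))) t))"
proof -
  have al1: "aleph_FGM M N X p" using al by (simp add: aleph_FGM_star_def)
  then have crm: "CRM M N X" by (simp add: aleph_FGM_def)
  have "(\<integral>\<omega>. exp (- t * aggregate N X \<omega>) \<partial>M)
     = (\<Sum>a\<in>{0,1}. \<Sum>b\<in>{0,1}. w a b * pgf (lawm a (DNm M N)) (laplace (lawm b (DXm M X)) t))"
  proof (rule generic[OF crm t wnn whalf])
    fix k n' x assume k1: "k \<ge> (1::nat)" and kn: "\<exists>n\<in>support_N M N. k \<le> n"
    show "joint_cdf M N X k n' x = (\<Sum>a\<in>{0,1}. \<Sum>b\<in>{0,1}. w a b * hh a (cdf_N M N n') * (\<Prod>m\<in>{1..k}. hh b (cdf_X M X (x m))))"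
      by (rule cop_from_aleph[OF al1 k1 kn pw[OF k1]])
  qed
  then show ?thesis by (simp add: DNm_def[OF crm] DXm_def[OF crm])
qed

lemma pw_tri:
  assumes k: "k \<ge> 1"
  shows "p_tri_tri k i = (if \<forall>j\<in>{1..k}. i j = i 1 then (if i 0 = i 1 then 1/2 else 0) else 0)"
proof -
  have iff: "(\<forall>j\<le>k. i j = i 0) = ((\<forall>j\<in>{1..k}. i j = i 1) \<and> i 0 = i 1)"
  proof
    assume A: "\<forall>j\<le>k. i j = i 0"
    have e: "i 1 = i 0" using mp[OF spec[OF A, of 1] k] .
    show "(\<forall>j\<in>{1..k}. i j = i 1) \<and> i 0 = i 1"
    proof (intro conjI ballI)
      fix j assume "j \<in> {1..k}" then have "j \<le> k" by simp
      then have "i j = i 0" using A by blast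
      then show "i j = i 1" using e by simp
    qed (use e in simp)
  next
    assume B: "(\<forall>j\<in>{1..k}. i j = i 1) \<and> i 0 = i 1"
    show "\<forall>j\<le>k. i j = i 0"
    proof (intro allI impI)
      fix j assume j: "j \<le> k"
      show "i j = i 0"
      proof (cases "j = 0")
        case False
        then have "j \<in> {1..k}" using j by simp
        then have "i j = i 1" using B by blast
        then show ?thesis using B by simp
      qed simp
    qed
  qed
  have aux: "\<And>C E (a::real). (if C \<and> E then a else 0) = (if C then (if E then a else 0) else 0)" by simp
  show ?thesis unfolding p_tri_tri_def iff by (rule aux)
qed

lemma pw_nabla:
  assumes k: "k \<ge> 1" and i01: "i 0 \<in> {0,1}" "i 1 \<in> {0,1}"
  shows "p_nabla_tri k i = (if \<forall>j\<in>{1..k}. i j = i 1 then (if i 0 = i 1 then 0 else 1/2) else 0)"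
proof -
  have iff: "(\<forall>j\<in>{1..k}. i j = 1 - i 0) = ((\<forall>j\<in>{1..k}. i j = i 1) \<and> i 0 \<noteq> i 1)"
  proof
    assume A: "\<forall>j\<in>{1..k}. i j = 1 - i 0"
    have "(1::nat) \<in> {1..k}" using k by simp
    then have e: "i 1 = 1 - i 0" using A by blast
    show "(\<forall>j\<in>{1..k}. i j = i 1) \<and> i 0 \<noteq> i 1"
    proof (intro conjI ballI)
      fix j assume "j \<in> {1..k}" then have "i j = 1 - i 0" using A by blast
      then show "i j = i 1" using e by simp
    next
      show "i 0 \<noteq> i 1" using e i01 by auto
    qed
  next
    assume B: "(\<forall>j\<in>{1..k}. i j = i 1) \<and> i 0 \<noteq> i 1"
    have ne: "i 0 \<noteq> i 1" using B by (rule conjunct2)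
    have e: "i 1 = 1 - i 0" using ne i01 by auto
    show "\<forall>j\<in>{1..k}. i j = 1 - i 0"
    proof
      fix j assume "j \<in> {1..k}"
      then have "i j = i 1" using B by blast
      then show "i j = 1 - i 0" using e by simp
    qed
  qed
  have aux: "\<And>C E (a::real). (if C \<and> \<not> E then a else 0) = (if C then (if E then 0 else a) else 0)" by simp
  show ?thesis unfolding p_nabla_tri_def iff by (rule aux)
qed

lemma pw_perp:
  shows "p_perp_tri k i = (if \<forall>j\<in>{1..k}. i j = i 1 then (\<lambda>a b. 1/4) (i 0) (i 1) else 0)"
  unfolding p_perp_tri_def by simp

lemma PiE01: "(k::nat) \<ge> 1 \<Longrightarrow> i \<in> PiE {..<k+1} (\<lambda>_. {0::nat,1}) \<Longrightarrow> i 0 \<in> {0,1} \<and> i 1 \<in> {0,1}"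
proof -
  assume k: "k \<ge> 1" and i: "i \<in> PiE {..<k+1} (\<lambda>_. {0::nat,1})"
  have a: "(0::nat) \<in> {..<k+1}" and b: "(1::nat) \<in> {..<k+1}" using k by auto
  show ?thesis by (rule conjI[OF PiE_mem[OF i a] PiE_mem[OF i b]])
qed

theorem mainTheorem13:
  fixes M :: "'a measure" and N :: "'a \<Rightarrow> nat" and X :: "nat \<Rightarrow> 'a \<Rightarrow> real"
  defines "DN \<equiv> distr M (count_space UNIV) N"
      and "DX \<equiv> distr M borel (X 1)"
  shows
   "(aleph_FGM_star M N X p_tri_tri \<longrightarrow> (\<forall>t\<ge>0.
       (\<integral>\<omega>. exp (- t * aggregate N X \<omega>) \<partial>M) =
         1/2 * pgf (law_min2 DN) (laplace (law_min2 DX) t)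
       + 1/2 * pgf (law_max2 DN) (laplace (law_max2 DX) t)))
  \<and> (aleph_FGM_star M N X p_nabla_tri \<longrightarrow> (\<forall>t\<ge>0.
       (\<integral>\<omega>. exp (- t * aggregate N X \<omega>) \<partial>M) =
         1/2 * pgf (law_min2 DN) (laplace (law_max2 DX) t)
       + 1/2 * pgf (law_max2 DN) (laplace (law_min2 DX) t)))
  \<and> (aleph_FGM_star M N X p_perp_tri \<longrightarrow> (\<forall>t\<ge>0.
       (\<integral>\<omega>. exp (- t * aggregate N X \<omega>) \<partial>M) =
         1/2 * pgf DN (laplace (law_min2 DX) t)
       + 1/2 * pgf DN (laplace (law_max2 DX) t)))"
proof (intro conjI impI allI)
  fix t :: real assume al: "aleph_FGM_star M N X p_tri_tri" and t: "t \<ge> 0"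
  have pw: "p_tri_tri k i = (if \<forall>j\<in>{1..k}. i j = i 1 then (\<lambda>a b. if a = b then 1/2 else 0) (i 0) (i 1) else 0)"
    if "k \<ge> 1" "i \<in> PiE {..<k+1} (\<lambda>_. {0,1})" for k i
    using pw_tri[OF that(1)] by simp
  show "(\<integral>\<omega>. exp (- t * aggregate N X \<omega>) \<partial>M) =
         1/2 * pgf (law_min2 DN) (laplace (law_min2 DX) t)
       + 1/2 * pgf (law_max2 DN) (laplace (law_max2 DX) t)"
    using generic_final[OF al pw, of t] t
    by (simp add: DN_def DX_def lawm_def)
next
  fix t :: real assume al: "aleph_FGM_star M N X p_nabla_tri" and t: "t \<ge> 0"
  have pw: "p_nabla_tri k i = (if \<forall>j\<in>{1..k}. i j = i 1 then (\<lambda>a b. if a = b then 0 else 1/2) (i 0) (i 1) else 0)"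
    if "k \<ge> 1" "i \<in> PiE {..<k+1} (\<lambda>_. {0,1})" for k i
    using pw_nabla[OF that(1)] PiE01[OF that] by simp
  show "(\<integral>\<omega>. exp (- t * aggregate N X \<omega>) \<partial>M) =
         1/2 * pgf (law_min2 DN) (laplace (law_max2 DX) t)
       + 1/2 * pgf (law_max2 DN) (laplace (law_min2 DX) t)"
    using generic_final[OF al pw, of t] t
    by (simp add: DN_def DX_def lawm_def)
next
  fix t :: real assume al: "aleph_FGM_star M N X p_perp_tri" and t: "t \<ge> 0"
  have al1: "aleph_FGM M N X p_perp_tri" using al by (simp add: aleph_FGM_star_def)
  then have crm: "CRM M N X" by (simp add: aleph_FGM_def)
  have g: "(\<integral>\<omega>. exp (- t * aggregate N X \<omega>) \<partial>M)
     = (\<Sum>a\<in>{0,1}. \<Sum>b\<in>{0,1}. 1/4 * pgf (lawm a DN) (laplace (lawm b DX) t))"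
  proof -
    have pw: "p_perp_tri k i = (if \<forall>j\<in>{1..k}. i j = i 1 then (\<lambda>a b. 1/4) (i 0) (i 1) else 0)"
      if "k \<ge> 1" "i \<in> PiE {..<k+1} (\<lambda>_. {0,1})" for k i
      by (rule pw_perp)
    show ?thesis using generic_final[OF al pw, of t] t unfolding DN_def DX_def by simp
  qed
  have mix: "pgf DN z = 1/2 * pgf (lawm 0 DN) z + 1/2 * pgf (lawm 1 DN) z" if "0 \<le> z" "z \<le> 1" for z
    using pgf_DN_mix[OF crm that] unfolding DN_def DNm_def[OF crm] .
  have L01: "0 \<le> laplace (lawm b DX) t" "laplace (lawm b DX) t \<le> 1" for b
    using laplace_nn(2,3)[OF crm t, of b] unfolding DX_def DXm_def[OF crm] by auto
  show "(\<integral>\<omega>. exp (- t * aggregate N X \<omega>) \<partial>M) =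
         1/2 * pgf DN (laplace (law_min2 DX) t)
       + 1/2 * pgf DN (laplace (law_max2 DX) t)"
  proof -
    have m0: "pgf DN (laplace (law_min2 DX) t) = 1/2 * pgf (law_min2 DN) (laplace (law_min2 DX) t) + 1/2 * pgf (law_max2 DN) (laplace (law_min2 DX) t)"
      using mix[OF L01(1)[of 0] L01(2)[of 0]] by (simp add: lawm_def)
    have m1: "pgf DN (laplace (law_max2 DX) t) = 1/2 * pgf (law_min2 DN) (laplace (law_max2 DX) t) + 1/2 * pgf (law_max2 DN) (laplace (law_max2 DX) t)"
      using mix[OF L01(1)[of 1] L01(2)[of 1]] by (simp add: lawm_def)
    show ?thesis unfolding g m0 m1 by (simp add: lawm_def algebra_simps)
  qed
qed


end
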